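(* Let $\rho=\tfrac12(I_2+\vec r\cdot\vec\sigma)$ be an arbitrary qubit state with Bloch vector $\vec r\in\mathbb R^3$, $|\vec r|\le 1$, and let $\alpha\in\{l_1,r\}$. Then $$C^\alpha_1(\rho)C^\alpha_2(\rho)+C^\alpha_2(\rho)C^\alpha_3(\rho)+C^\alpha_3(\rho)C^\alpha_1(\rho)\;\le\;\sum_{i=1}^3 \big(C^\alpha_i(\rho)\big)^2\;\le\;\Omega_\alpha,$$ where $\Omega_{l_1}=\Omega_r=2$.
   Context: $\sigma_1,\sigma_2,\sigma_3$ are the Pauli matrices, $\vec\sigma=(\sigma_1,\sigma_2,\sigma_3)$. For $k\in\{1,2,3\}$, "basis $k$" is the orthonormal eigenbasis $\{|e^k_0\rangle,|e^k_1\rangle\}$ of $\sigma_k$. The $l_1$-norm of coherence in basis $k$ is $C^{l_1}_k(\rho)=\sum_{m\ne n}|\langle e^k_m|\rho|e^k_n\rangle|$; for a qubit this equals $\sqrt{r_j^2+r_l^2}$ where $\{k,j,l\}=\{1,2,3\}$. The relative entropy of coherence in basis $k$ is $C^r_k(\rho)=S(\Delta_k(\rho))-S(\rho)$, where $S$ is the von Neumann entropy with base-2 logarithm and $\Delta_k(\rho)=\sum_m \langle e^k_m|\rho|e^k_m\rangle |e^k_m\rangle\langle e^k_m|$ is the dephasing in basis $k$; for a qubit this equals $\mathcal H\big(\tfrac{1+r_k}{2}\big)-\mathcal H\big(\tfrac{1+|\vec r|}{2}\big)$ with $\mathcal H(x)=-x\log_2x-(1-x)\log_2(1-x)$. *)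

theory Defs
  imports Complex_Main
begin

text \<open>2x2 complex matrices as functions on indices {0,1}; vectors in C^2 likewise.\<close>
type_synonym cmat2 = "nat \<Rightarrow> nat \<Rightarrow> complex"
type_synonym cvec2 = "nat \<Rightarrow> complex"

definition idm :: cmat2 where
  "idm a b = (if a = b then 1 else 0)"

definition pauli :: "nat \<Rightarrow> cmat2" where
  "pauli k a b =
     (if k = 1 then (if a \<noteq> b then 1 else 0)
      else if k = 2 then (if a = 0 \<and> b = 1 then - \<i> else if a = 1 \<and> b = 0 then \<i> else 0)
      else (if a = 0 \<and> b = 0 then 1 else if a = 1 \<and> b = 1 then -1 else 0))"

definition qubit :: "real \<Rightarrow> real \<Rightarrow> real \<Rightarrow> cmat2" where
  "qubit r1 r2 r3 a b =
     (idm a b + of_real r1 * pauli 1 a b + of_real r2 * pauli 2 a b + of_real r3 * pauli 3 a b) / 2"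

text \<open>Orthonormal eigenbasis {e^k_0, e^k_1} of sigma_k.\<close>
definition ebasis :: "nat \<Rightarrow> nat \<Rightarrow> cvec2" where
  "ebasis k m a =
     (if k = 1 then (if a = 0 then 1 else (if m = 0 then 1 else -1)) / of_real (sqrt 2)
      else if k = 2 then (if a = 0 then 1 else (if m = 0 then \<i> else - \<i>)) / of_real (sqrt 2)
      else (if a = m then 1 else 0))"

definition melem :: "cvec2 \<Rightarrow> cmat2 \<Rightarrow> cvec2 \<Rightarrow> complex" where
  "melem u A v = (\<Sum>a<2. \<Sum>b<2. cnj (u a) * A a b * v b)"

definition C_l1 :: "nat \<Rightarrow> cmat2 \<Rightarrow> real" where
  "C_l1 k \<rho> = (\<Sum>m<2. \<Sum>n<2. if m \<noteq> n then cmod (melem (ebasis k m) \<rho> (ebasis k n)) else 0)"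

definition dephase :: "nat \<Rightarrow> cmat2 \<Rightarrow> cmat2" where
  "dephase k \<rho> a b = (\<Sum>m<2. melem (ebasis k m) \<rho> (ebasis k m) * ebasis k m a * cnj (ebasis k m b))"

text \<open>Eigenvalues of a 2x2 Hermitian matrix (roots of the characteristic polynomial,
  with multiplicity), and the von Neumann entropy with base-2 logarithm.\<close>
definition mtrace :: "cmat2 \<Rightarrow> real" where
  "mtrace A = Re (A 0 0 + A 1 1)"
definition mdet :: "cmat2 \<Rightarrow> real" where
  "mdet A = Re (A 0 0 * A 1 1 - A 0 1 * A 1 0)"
definition eig_plus :: "cmat2 \<Rightarrow> real" where
  "eig_plus A = (mtrace A + sqrt ((mtrace A)^2 - 4 * mdet A)) / 2"
definition eig_minus :: "cmat2 \<Rightarrow> real" where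
  "eig_minus A = (mtrace A - sqrt ((mtrace A)^2 - 4 * mdet A)) / 2"

definition eta :: "real \<Rightarrow> real" where
  "eta x = (if x = 0 then 0 else - x * log 2 x)"

definition vN_entropy :: "cmat2 \<Rightarrow> real" where
  "vN_entropy A = eta (eig_plus A) + eta (eig_minus A)"

definition C_r :: "nat \<Rightarrow> cmat2 \<Rightarrow> real" where
  "C_r k \<rho> = vN_entropy (dephase k \<rho>) - vN_entropy \<rho>"

end

theory Submission
  imports Defs "HOL-Analysis.Harmonic_Numbers"
begin


definition Ent :: "real \<Rightarrow> real" where "Ent y = eta ((1+y)/2) + eta ((1-y)/2)"

lemma lnA: fixes t :: real assumes "1 \<le> t" shows "2 * ln t \<le> t - 1/t"
proof -
  define f where "f = (\<lambda>x::real. x - 1/x - 2*ln x)"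
  have "f 1 \<le> f t"
  proof (rule deriv_nonneg_imp_mono[where g=f and a=1 and b=t and g'="\<lambda>x. 1 + 1/x^2 - 2/x"])
    fix x :: real assume "x \<in> {1..t}"
    then have x: "x \<ge> 1" by auto
    show "(f has_real_derivative (1 + 1/x^2 - 2/x)) (at x)"
      unfolding f_def using x by (auto intro!: derivative_eq_intros simp: field_simps power2_eq_square)
  next
    fix x :: real assume "x \<in> {1..t}"
    then have x: "x \<ge> 1" by auto
    have "1 + 1/x^2 - 2/x = (1 - 1/x)^2" using x by (simp add: field_simps power2_eq_square)
    then show "0 \<le> 1 + 1/x^2 - 2/x" by simp
  qed (use assms in auto)
  then show ?thesis by (simp add: f_def)
qed

lemma lnB1: fixes y :: real assumes "0 \<le> y" "y < 1" shows "2*y \<le> ln (1+y) - ln (1-y)"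
proof -
  define f where "f = (\<lambda>x::real. ln (1+x) - ln (1-x) - 2*x)"
  have "f 0 \<le> f y"
  proof (rule deriv_nonneg_imp_mono[where g=f and a=0 and b=y and g'="\<lambda>x. 1/(1+x) + 1/(1-x) - 2"])
    fix x :: real assume "x \<in> {0..y}"
    then have x: "0 \<le> x" "x < 1" using assms by auto
    show "(f has_real_derivative (1/(1+x) + 1/(1-x) - 2)) (at x)"
    proof -
      have nz: "1 + x \<noteq> 0" "1 - x \<noteq> 0" "1 - x*x \<noteq> 0" "1 + x > 0" "1 - x > 0"
        using x mult_left_le_one_le[of x x] by auto
      show ?thesis unfolding f_def using x nz by (auto intro!: derivative_eq_intros simp: field_simps)
    qed
  next
    fix x :: real assume "x \<in> {0..y}"
    then have x: "0 \<le> x" "x < 1" using assms by auto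
    have nz: "1 + x \<noteq> 0" "1 - x \<noteq> 0" "1 - x*x \<noteq> 0"
        using x mult_left_le_one_le[of x x] by auto
    have "1/(1+x) + 1/(1-x) - 2 = 2*x^2/((1+x)*(1-x))" using x nz by (simp add: field_simps power2_eq_square)
    then show "0 \<le> 1/(1+x) + 1/(1-x) - 2" using x by simp
  qed (use assms in auto)
  then show ?thesis by (simp add: f_def)
qed

lemma lnB: fixes y :: real assumes "0 \<le> y" "y < 1" shows "y^2 \<le> (1+y) * ln (1+y) + (1-y) * ln (1-y)"
proof -
  define f where "f = (\<lambda>x::real. (1+x) * ln (1+x) + (1-x) * ln (1-x) - x^2)"
  have "f 0 \<le> f y"
  proof (rule deriv_nonneg_imp_mono[where g=f and a=0 and b=y and g'="\<lambda>x. ln (1+x) - ln (1-x) - 2*x"])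
    fix x :: real assume "x \<in> {0..y}"
    then have x: "0 \<le> x" "x < 1" using assms by auto
    show "(f has_real_derivative (ln (1+x) - ln (1-x) - 2*x)) (at x)"
    proof -
      have nz: "1 + x \<noteq> 0" "1 - x \<noteq> 0" "1 - x*x \<noteq> 0" "1 + x > 0" "1 - x > 0"
        using x mult_left_le_one_le[of x x] by auto
      have "x*x*(1+x) < 1*(1+x)" using x mult_left_le_one_le[of x x] by (intro mult_strict_right_mono) auto
      then have "x * x + x * (x * x) \<noteq> 1 + x" by (simp add: algebra_simps)
      note nz = nz this
      show ?thesis unfolding f_def using x nz by (auto intro!: derivative_eq_intros simp: algebra_simps) (use nz in \<open>simp add: field_simps\<close>)
    qed
  next
    fix x :: real assume "x \<in> {0..y}"
    then have x: "0 \<le> x" "x < 1" using assms by auto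
    show "0 \<le> ln (1+x) - ln (1-x) - 2*x" using lnB1[OF x] by simp
  qed (use assms in auto)
  then show ?thesis by (simp add: f_def)
qed

lemma eta_pos: fixes p :: real assumes "0 < p" shows "eta p = - p * ln p / ln 2"
  using assms by (simp add: eta_def log_def)

lemma eta_lower: fixes p :: real assumes "0 \<le> p" "p \<le> 1" shows "p * (1-p) \<le> eta p"
proof (cases "p = 0")
  case True then show ?thesis by (simp add: eta_def)
next
  case False
  then have p: "0 < p" using assms by simp
  have "1 - p \<le> - ln p" using ln_le_minus_one[OF p] by simp
  then have a: "p * (1-p) \<le> - p * ln p" using p by (metis minus_mult_commute mult_left_mono less_imp_le mult_minus_right)
  have l: "0 < ln (2::real)" "ln (2::real) < 1" using ln_2_less_1 by auto
  have b: "0 \<le> p*(1-p)" using assms by simp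
  have "p * (1-p) \<le> p*(1-p) / ln 2" using l b by (simp add: le_divide_eq mult_left_le)
  also have "\<dots> \<le> (- p * ln p) / ln 2" by (rule divide_right_mono[OF a]) (use l in simp)
  finally show ?thesis using eta_pos[OF p] by simp
qed

lemma Ent_lower: fixes y :: real assumes "0 \<le> y" "y \<le> 1" shows "(1 - y^2)/2 \<le> Ent y"
proof -
  have "(1+y)/2 * (1 - (1+y)/2) \<le> eta ((1+y)/2)" using assms by (intro eta_lower) auto
  moreover have "(1-y)/2 * (1 - (1-y)/2) \<le> eta ((1-y)/2)" using assms by (intro eta_lower) auto
  ultimately show ?thesis unfolding Ent_def by (simp add: field_simps power2_eq_square)
qed

lemma eta_sq: fixes p :: real assumes p: "0 < p" "p \<le> 1" shows "eta p \<le> (1-p) * sqrt p / ln 2"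
proof -
  define s where "s = sqrt p"
  have s: "0 < s" "s \<le> 1" "s * s = p" using p by (auto simp: s_def)
  have t: "1 \<le> 1/s" using s by simp
  have "2 * ln (1/s) \<le> 1/s - 1/(1/s)" by (rule lnA[OF t])
  moreover have "ln (1/s) = - ln p / 2" using p by (simp add: s_def ln_div ln_sqrt)
  ultimately have "- ln p \<le> 1/s - s" by simp
  then have "p * (- ln p) \<le> p * (1/s - s)" using p by (intro mult_left_mono) auto
  also have "p * (1/s - s) = (1-p) * s" using s by (simp add: field_simps flip: s(3))
  finally have a: "- p * ln p \<le> (1-p) * s" by simp
  have "eta p = (- p * ln p) / ln 2" using eta_pos[OF p(1)] by simp
  also have "\<dots> \<le> (1-p) * s / ln 2" by (rule divide_right_mono[OF a]) simp
  finally show ?thesis by (simp add: s_def)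
qed

lemma ln2_bounds: "2/3 \<le> ln (2::real)" "ln (2::real) \<le> 25/36"
  using ln2_ge_two_thirds ln2_le_25_over_36 by auto

lemma Ent_upper_big: fixes y :: real assumes y: "0 \<le> y" "y < 1" "2/5 \<le> y^2" shows "Ent y \<le> sqrt (1 - y^2)"
proof -
  define p where "p = (1+y)/2"
  define q where "q = (1-y)/2"
  have pq: "0 < p" "p \<le> 1" "0 < q" "q \<le> 1" "p + q = 1" using y by (auto simp: p_def q_def field_simps)
  define a where "a = sqrt p"
  define b where "b = sqrt q"
  have ab: "0 \<le> a" "0 \<le> b" "a*a = p" "b*b = q" using pq by (auto simp: a_def b_def)
  have L: "2/3 \<le> ln (2::real)" "ln (2::real) \<le> 25/36" by (rule ln2_bounds)+
  have "Ent y = eta p + eta q" by (simp add: Ent_def p_def q_def)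
  also have "\<dots> \<le> (1-p) * a / ln 2 + (1-q) * b / ln 2"
    using eta_sq[OF pq(1,2)] eta_sq[OF pq(3,4)] by (simp add: a_def b_def)
  also have "\<dots> = (a*b) * (a+b) / ln 2"
  proof -
    have "(1-p) * a + (1-q) * b = (a*b) * (a+b)"
    proof -
      have "1-p = b*b" "1-q = a*a" using pq(5) ab(3,4) by linarith+
      then show ?thesis unfolding \<open>1-p = b*b\<close> \<open>1-q = a*a\<close> by (simp add: algebra_simps)
    qed
    then show ?thesis by (metis add_divide_distrib)
  qed
  finally have e: "Ent y \<le> (a*b) * (a+b) / ln 2" .
  have w: "a*b = sqrt (1 - y^2) / 2"
  proof -
    have "a*b = sqrt (p*q)" by (simp add: a_def b_def real_sqrt_mult)
    also have "p*q = (1 - y^2)/4" by (simp add: p_def q_def field_simps power2_eq_square)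
    finally show ?thesis by (simp add: real_sqrt_divide)
  qed
  have w2: "(a*b)^2 \<le> (7/18)^2"
  proof -
    have y1: "0 \<le> 1 - y^2" using y by (simp add: abs_square_le_1)
    have "(a*b)^2 = (sqrt (1 - y^2))^2/4" unfolding w by (simp add: power_divide)
    also have "\<dots> = (1 - y^2)/4" using y1 by simp
    finally have "(a*b)^2 = (1 - y^2)/4" .
    then show ?thesis using y by (simp add: power2_eq_square)
  qed
  have w3: "a*b \<le> 7/18" using w2 ab power2_le_imp_le[of "a*b" "7/18"] by auto
  have "(a+b)^2 = 1 + 2*(a*b)" using ab pq(5) by (simp add: power2_eq_square algebra_simps)
  also have "\<dots> \<le> (4/3)^2" using w3 by (simp add: power2_eq_square)
  finally have "a + b \<le> 4/3" using ab power2_le_imp_le[of "a+b" "4/3"] by auto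
  then have "a + b \<le> 2 * ln 2" using L by simp
  then have "(a*b) * (a+b) \<le> (a*b) * (2 * ln 2)" using ab by (intro mult_left_mono) auto
  then have "(a*b) * (a+b) / ln 2 \<le> (a*b) * 2" using L by (simp add: divide_le_eq)
  with e w show ?thesis by linarith
qed

lemma Ent_upper_small: fixes y :: real assumes y: "0 \<le> y" "y^2 \<le> 2/5" shows "Ent y \<le> sqrt (1 - y^2)"
proof -
  have y1: "y < 1"
  proof (rule ccontr)
    assume "\<not> y < 1" then have "1 \<le> y" by simp
    then have "1 \<le> y^2" by (simp add: one_le_power)
    with y show False by simp
  qed
  define L where "L = ln (2::real)"
  have L: "2/3 \<le> L" "L \<le> 25/36" using ln2_bounds by (auto simp: L_def)
  have Lp: "0 < L" using L by simp
  define u where "u = y^2"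
  have u: "0 \<le> u" "u \<le> 2/5" using y by (auto simp: u_def)
  define phi where "phi = (1+y) * ln (1+y) + (1-y) * ln (1-y)"
  have ph: "u \<le> phi" using lnB[OF y(1) y1] by (simp add: u_def phi_def)
  have e1: "eta ((1+y)/2) = - ((1+y)/2) * (ln (1+y) - L) / L"
    using y y1 by (simp add: eta_pos L_def ln_div)
  have e2: "eta ((1-y)/2) = - ((1-y)/2) * (ln (1-y) - L) / L"
    using y y1 by (simp add: eta_pos L_def ln_div)
  have "Ent y = (L - phi/2) / L"
    unfolding Ent_def e1 e2 phi_def using Lp by (simp add: field_simps)
  also have "\<dots> \<le> (L - u/2) / L" using ph Lp by (simp add: divide_right_mono)
  also have "\<dots> \<le> sqrt (1 - y^2)"
  proof (rule real_le_rsqrt)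
    have k: "0 \<le> (L - 2/3) * (25/36 - L)" using L by simp
    have k2: "0 \<le> u * (4*L - 4*L^2 - u)"
    proof -
      have ke: "(L - 2/3) * (25/36 - L) = (49/36)*L - 50/108 - L*L" by (simp add: field_simps)
      have kk: "L*L \<le> (49/36)*L - 50/108" using k unfolding ke by linarith
      have "0 \<le> 4*L - 4*L^2 - u" unfolding power2_eq_square using kk L u by linarith
      then show ?thesis using u by simp
    qed
    have "((L - u/2) / L)^2 = (2*L - u)^2 / (4 * L^2)" using Lp by (simp add: field_simps power2_eq_square)
    also have "\<dots> \<le> (4 * L^2 * (1 - u)) / (4 * L^2)"
      using k2 by (intro divide_right_mono) (auto simp: algebra_simps power2_eq_square)
    also have "\<dots> = 1 - u" using Lp by simp
    finally show "((L - u/2) / L)^2 \<le> 1 - y^2" by (simp add: u_def)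
  qed
  finally show ?thesis .
qed

lemma Ent_one: "Ent 1 = 0" by (simp add: Ent_def eta_def)

lemma Ent_upper: fixes y :: real assumes y: "0 \<le> y" "y \<le> 1" shows "Ent y \<le> sqrt (1 - y^2)"
proof (cases "y^2 \<le> 2/5")
  case True then show ?thesis using Ent_upper_small y by simp
next
  case False
  show ?thesis
  proof (cases "y = 1")
    case True then show ?thesis by (simp add: Ent_one)
  next
    case False2: False
    then show ?thesis using Ent_upper_big[of y] y False by simp
  qed
qed

lemma Ent_nonneg: fixes y :: real assumes "0 \<le> y" "y \<le> 1" shows "0 \<le> Ent y"
proof -
  have "0 \<le> (1 - y^2)/2" using assms by (simp add: abs_square_le_1)
  with Ent_lower[OF assms] show ?thesis by linarith
qed

lemma bound_k: fixes x R :: real assumes "0 \<le> x" "x \<le> R" "R \<le> 1"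
  shows "(Ent x - Ent R)^2 \<le> (sqrt (1 - x^2) - (1 - R^2)/2)^2"
proof -
  have x1: "x \<le> 1" using assms by simp
  have R0: "0 \<le> R" using assms by simp
  have xR: "x^2 \<le> R^2" using assms by (intro power_mono) auto
  have R1: "R^2 \<le> 1" using assms R0 by (simp add: abs_square_le_1)
  have s: "sqrt (1 - R^2) \<le> sqrt (1 - x^2)" using xR by simp
  have a: "Ent x \<le> sqrt (1 - x^2)" by (rule Ent_upper[OF assms(1) x1])
  have b: "(1 - R^2)/2 \<le> Ent R" by (rule Ent_lower[OF R0 assms(3)])
  have c: "(1 - x^2)/2 \<le> Ent x" by (rule Ent_lower[OF assms(1) x1])
  have d: "Ent R \<le> sqrt (1 - R^2)" by (rule Ent_upper[OF R0 assms(3)])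
  have "\<bar>Ent x - Ent R\<bar> \<le> sqrt (1 - x^2) - (1 - R^2)/2"
  proof -
    have "Ent x - Ent R \<le> sqrt (1 - x^2) - (1 - R^2)/2" using a b by linarith
    moreover have "- (Ent x - Ent R) \<le> sqrt (1 - x^2) - (1 - R^2)/2"
    proof -
      have e0: "(1 - R^2)/2 \<le> (1 - x^2)/2" using xR by simp
      have e: "(1 - R^2)/2 \<le> Ent x" using c e0 by (rule_tac order_trans[OF e0 c])
      have f: "Ent R \<le> sqrt (1 - x^2)" using d s by linarith
      show ?thesis using e f by linarith
    qed
    ultimately show ?thesis by (simp only: abs_le_iff)
  qed
  then have "\<bar>Ent x - Ent R\<bar>^2 \<le> (sqrt (1 - x^2) - (1 - R^2)/2)^2"
    by (intro power_mono) auto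
  then show ?thesis by simp
qed

lemma sum_bound:
  fixes x1 x2 x3 :: real
  assumes x: "0 \<le> x1" "0 \<le> x2" "0 \<le> x3" and S: "x1^2 + x2^2 + x3^2 \<le> 1"
  defines "R \<equiv> sqrt (x1^2 + x2^2 + x3^2)"
  shows "(Ent x1 - Ent R)^2 + (Ent x2 - Ent R)^2 + (Ent x3 - Ent R)^2 \<le> 2"
proof -
  define t where "t = 1 - R^2"
  have R2: "R^2 = x1^2 + x2^2 + x3^2" unfolding R_def using x by simp
  have t: "0 \<le> t" "t \<le> 1" using S R2 zero_le_power2[of x1] zero_le_power2[of x2] zero_le_power2[of x3] unfolding t_def by linarith+
  have R1: "R \<le> 1" unfolding R_def using S by simp
  have xR: "x1 \<le> R" "x2 \<le> R" "x3 \<le> R" unfolding R_def using x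
    by (auto intro!: real_le_rsqrt)
  define L where "L = t/2"
  have L0: "0 \<le> L" using t by (simp add: L_def)
  have key: "(Ent xi - Ent R)^2 \<le> (1 - xi^2) - 2 * L * (1 - xi^2) + L^2"
    if xi: "0 \<le> xi" "xi \<le> R" for xi
  proof -
    have xi1: "xi^2 \<le> 1" using xi R1 by (metis abs_square_le_1 abs_of_nonneg order_trans)
    define u where "u = sqrt (1 - xi^2)"
    have u2: "u^2 = 1 - xi^2" using xi1 by (simp add: u_def)
    have u0: "0 \<le> u" "u \<le> 1" using xi1 by (auto simp: u_def)
    have uu: "u^2 \<le> u" using u0 by (simp add: power2_eq_square mult_left_le_one_le)
    have "(Ent xi - Ent R)^2 \<le> (u - L)^2" using bound_k[OF xi R1] by (simp add: u_def L_def t_def)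
    also have "\<dots> = u^2 - 2*(L*u) + L^2" by (simp add: power2_eq_square algebra_simps)
    also have "\<dots> \<le> u^2 - 2*(L*u^2) + L^2" using mult_left_mono[OF uu L0] by simp
    finally show ?thesis using u2 by (simp add: algebra_simps)
  qed
  have "(Ent x1 - Ent R)^2 + (Ent x2 - Ent R)^2 + (Ent x3 - Ent R)^2
      \<le> (3 - R^2) - 2 * L * (3 - R^2) + 3 * L^2"
    using key[OF x(1) xR(1)] key[OF x(2) xR(2)] key[OF x(3) xR(3)] R2 by (simp add: algebra_simps)
  also have "\<dots> = 2 - t - t^2/4" by (simp add: L_def t_def field_simps power2_eq_square)
  also have "\<dots> \<le> 2" using t zero_le_power2[of t] by linarith
  finally show ?thesis .
qed



lemma s2: "(of_real (sqrt 2) :: complex) * of_real (sqrt 2) = 2"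
  by (simp flip: of_real_mult)
lemma melem_exp: "melem u A v = cnj (u 0) * A 0 0 * v 0 + cnj (u 0) * A 0 1 * v 1 + cnj (u 1) * A 1 0 * v 0 + cnj (u 1) * A 1 1 * v 1"
  by (simp add: melem_def numeral_2_eq_2)
lemma q00: "qubit r1 r2 r3 0 0 = (1 + of_real r3)/2" by (simp add: qubit_def pauli_def idm_def)
lemma q11: "qubit r1 r2 r3 1 1 = (1 - of_real r3)/2" by (simp add: qubit_def pauli_def idm_def)
lemma q01: "qubit r1 r2 r3 0 1 = Complex r1 (-r2)/2" by (simp add: qubit_def pauli_def idm_def complex_eq_iff)
lemma q10: "qubit r1 r2 r3 1 0 = Complex r1 r2/2" by (simp add: qubit_def pauli_def idm_def complex_eq_iff)
lemma e1: "ebasis 1 0 0 = 1/of_real (sqrt 2)" "ebasis 1 0 1 = 1/of_real (sqrt 2)" "ebasis 1 1 0 = 1/of_real (sqrt 2)" "ebasis 1 1 1 = -1/of_real (sqrt 2)"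
  "ebasis 2 0 0 = 1/of_real (sqrt 2)" "ebasis 2 0 1 = \<i>/of_real (sqrt 2)" "ebasis 2 1 0 = 1/of_real (sqrt 2)" "ebasis 2 1 1 = -\<i>/of_real (sqrt 2)"
  "ebasis 3 0 0 = 1" "ebasis 3 0 1 = 0" "ebasis 3 1 0 = 0" "ebasis 3 1 1 = 1"
  by (simp_all add: ebasis_def)
lemma qS: "qubit r1 r2 r3 (Suc 0) (Suc 0) = (1 - of_real r3)/2" "qubit r1 r2 r3 0 (Suc 0) = Complex r1 (-r2)/2" "qubit r1 r2 r3 (Suc 0) 0 = Complex r1 r2/2"
  using q11 q01 q10 by simp_all
lemma s2b: "(of_real (sqrt 2) :: complex) * 2 * of_real (sqrt 2) = 4"
  by (simp flip: of_real_mult)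
lemma c2nz: "(of_real (sqrt 2) :: complex) \<noteq> 0" by simp
lemma t1: "melem (ebasis 1 0) (qubit r1 r2 r3) (ebasis 1 1) = Complex (r3/2) (r2/2)"
  apply (simp add: melem_exp ebasis_def q00 q01 q10 q11 qS s2 s2b)
  apply (simp add: complex_eq_iff field_simps)
  done

lemma s4: "(of_real (sqrt 2) :: complex) * of_real (sqrt 2) * of_real (sqrt 2) * of_real (sqrt 2) = 4"
  by (simp flip: of_real_mult)
lemma dexp: "dephase k A a b = melem (ebasis k 0) A (ebasis k 0) * ebasis k 0 a * cnj (ebasis k 0 b) + melem (ebasis k 1) A (ebasis k 1) * ebasis k 1 a * cnj (ebasis k 1 b)"
  by (simp add: dephase_def numeral_2_eq_2)
lemma tr: "k \<in> {1,2,3} \<Longrightarrow> mtrace (dephase k (qubit r1 r2 r3)) = 1"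
  apply (auto simp add: mtrace_def dexp melem_exp ebasis_def q00 q01 q10 q11 qS s2 s2b)
  apply (simp_all add: field_simps s4)
  done
lemma det1: "mdet (dephase 1 (qubit r1 r2 r3)) = (1 - r1^2)/4"
  apply (simp add: mdet_def dexp melem_exp ebasis_def q00 q01 q10 q11 qS s2 s2b)
  apply (simp add: field_simps s4 power2_eq_square)
  done
lemma det2: "mdet (dephase 2 (qubit r1 r2 r3)) = (1 - r2^2)/4"
  apply (simp add: mdet_def dexp melem_exp ebasis_def q00 q01 q10 q11 qS s2 s2b)
  apply (simp add: field_simps s4 power2_eq_square)
  done
lemma det3: "mdet (dephase 3 (qubit r1 r2 r3)) = (1 - r3^2)/4"
  apply (simp add: mdet_def dexp melem_exp ebasis_def q00 q01 q10 q11 qS s2 s2b)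
  apply (simp add: field_simps s4 power2_eq_square)
  done
lemma trq: "mtrace (qubit r1 r2 r3) = 1"
  by (simp add: mtrace_def q00 q11 qS field_simps)
lemma detq: "mdet (qubit r1 r2 r3) = (1 - (r1^2+r2^2+r3^2))/4"
  apply (simp add: mdet_def q00 q11 qS)
  apply (simp add: field_simps power2_eq_square)
  done
lemma Cl1exp: "C_l1 k A = cmod (melem (ebasis k 0) A (ebasis k 1)) + cmod (melem (ebasis k 1) A (ebasis k 0))"
  by (simp add: C_l1_def numeral_2_eq_2)
lemma cmh: "cmod (Complex (a/2) (b/2)) = sqrt (a^2+b^2) / 2"
proof -
  have "cmod (Complex (a/2) (b/2)) = sqrt ((a^2+b^2)/4)" by (simp add: cmod_def power_divide)
  also have "\<dots> = sqrt (a^2+b^2) / 2" by (simp add: real_sqrt_divide)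
  finally show ?thesis .
qed
lemma l1_1: "C_l1 1 (qubit r1 r2 r3) = sqrt (r3^2+r2^2)"
proof -
  have a: "melem (ebasis 1 0) (qubit r1 r2 r3) (ebasis 1 1) = Complex (r3/2) (r2/2)"
    apply (simp add: melem_exp ebasis_def q00 q01 q10 q11 qS s2 s2b)
    apply (simp add: complex_eq_iff field_simps)
    done
  have b: "melem (ebasis 1 1) (qubit r1 r2 r3) (ebasis 1 0) = Complex (r3/2) (-r2/2)"
    apply (simp add: melem_exp ebasis_def q00 q01 q10 q11 qS s2 s2b)
    apply (simp add: complex_eq_iff field_simps)
    done
  show ?thesis unfolding Cl1exp a b cmh by simp
qed
lemma l1_2: "C_l1 2 (qubit r1 r2 r3) = sqrt (r3^2+r1^2)"
proof -
  have a: "melem (ebasis 2 0) (qubit r1 r2 r3) (ebasis 2 1) = Complex (r3/2) (-r1/2)"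
    apply (simp add: melem_exp ebasis_def q00 q01 q10 q11 qS s2 s2b)
    apply (simp add: complex_eq_iff field_simps)
    done
  have b: "melem (ebasis 2 1) (qubit r1 r2 r3) (ebasis 2 0) = Complex (r3/2) (r1/2)"
    apply (simp add: melem_exp ebasis_def q00 q01 q10 q11 qS s2 s2b)
    apply (simp add: complex_eq_iff field_simps)
    done
  show ?thesis unfolding Cl1exp a b cmh by simp
qed
lemma l1_3: "C_l1 3 (qubit r1 r2 r3) = sqrt (r1^2+r2^2)"
proof -
  have a: "melem (ebasis 3 0) (qubit r1 r2 r3) (ebasis 3 1) = Complex (r1/2) (-r2/2)"
    apply (simp add: melem_exp ebasis_def q00 q01 q10 q11 qS s2 s2b)
    apply (simp add: complex_eq_iff field_simps)
    done
  have b: "melem (ebasis 3 1) (qubit r1 r2 r3) (ebasis 3 0) = Complex (r1/2) (r2/2)"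
    apply (simp add: melem_exp ebasis_def q00 q01 q10 q11 qS s2 s2b)
    apply (simp add: complex_eq_iff field_simps)
    done
  show ?thesis unfolding Cl1exp a b cmh by simp
qed
lemma sum3: "(\<Sum>i\<in>{1..3::nat}. f i) = f 1 + f 2 + (f 3 :: real)"
  by (simp add: eval_nat_numeral atLeastAtMostSuc_conv)

lemma vN: assumes "mtrace A = 1" "mdet A = (1 - s)/4" "0 \<le> s"
  shows "vN_entropy A = Ent (sqrt s)"
proof -
  have "(mtrace A)^2 - 4 * mdet A = s" using assms by simp
  then show ?thesis using assms(1) by (simp add: vN_entropy_def eig_plus_def eig_minus_def Ent_def)
qed

lemma tri: fixes a b c :: real shows "a*b + b*c + c*a \<le> a^2 + b^2 + c^2"
proof -
  have "0 \<le> (a-b)^2 + (b-c)^2 + (c-a)^2" by simp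
  then show ?thesis by (simp add: power2_eq_square algebra_simps)
qed

theorem mainTheorem1:
  fixes r1 r2 r3 :: real
  assumes "r1\<^sup>2 + r2\<^sup>2 + r3\<^sup>2 \<le> 1"
  shows "\<forall>C \<in> {C_l1, C_r}.
           (let \<rho> = qubit r1 r2 r3 in
              C 1 \<rho> * C 2 \<rho> + C 2 \<rho> * C 3 \<rho> + C 3 \<rho> * C 1 \<rho>
                \<le> (\<Sum>i\<in>{1..3::nat}. (C i \<rho>)\<^sup>2)
            \<and> (\<Sum>i\<in>{1..3::nat}. (C i \<rho>)\<^sup>2) \<le> 2)"
proof -
  define S where "S = r1^2 + r2^2 + r3^2"
  have S0: "0 \<le> S" by (simp add: S_def)
  have l1: "(C_l1 1 (qubit r1 r2 r3))^2 + (C_l1 2 (qubit r1 r2 r3))^2 + (C_l1 3 (qubit r1 r2 r3))^2 \<le> 2"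
    using assms unfolding l1_1 l1_2 l1_3 by simp
  have vq: "vN_entropy (qubit r1 r2 r3) = Ent (sqrt S)"
    by (rule vN) (auto simp: trq detq S_def)
  have v1: "vN_entropy (dephase 1 (qubit r1 r2 r3)) = Ent (sqrt (r1^2))"
    by (rule vN[OF tr det1]) auto
  have v2: "vN_entropy (dephase 2 (qubit r1 r2 r3)) = Ent (sqrt (r2^2))"
    by (rule vN[OF tr det2]) auto
  have v3: "vN_entropy (dephase 3 (qubit r1 r2 r3)) = Ent (sqrt (r3^2))"
    by (rule vN[OF tr det3]) auto
  have cr: "(C_r 1 (qubit r1 r2 r3))^2 + (C_r 2 (qubit r1 r2 r3))^2 + (C_r 3 (qubit r1 r2 r3))^2 \<le> 2"
  proof -
    have "(Ent (sqrt (r1^2)) - Ent (sqrt ((sqrt (r1^2))^2 + (sqrt (r2^2))^2 + (sqrt (r3^2))^2)))^2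
        + (Ent (sqrt (r2^2)) - Ent (sqrt ((sqrt (r1^2))^2 + (sqrt (r2^2))^2 + (sqrt (r3^2))^2)))^2
        + (Ent (sqrt (r3^2)) - Ent (sqrt ((sqrt (r1^2))^2 + (sqrt (r2^2))^2 + (sqrt (r3^2))^2)))^2 \<le> 2"
      by (rule sum_bound) (use assms in auto)
    then show ?thesis unfolding C_r_def v1 v2 v3 vq S_def by simp
  qed
  show ?thesis
    unfolding Let_def sum3 using l1 cr tri by auto
qed

end
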